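(* Let $R$ be a discrete valuation ring with uniformizer $\pi$, and let $T$ be an $R$-module such that $\pi^NT=0$ for some $N\geq1$. Let $\pi_T$ be the endomorphism of $T$ given by multiplication by $\pi$, and define $m_-(T)=\sum_{n\geq0}(\mathrm{Im}\,\pi_T^n\cap\mathrm{Ker}\,\pi_T^n)$ and $m_+(T)=\bigcap_{n\geq0}(\mathrm{Im}\,\pi_T^n+\mathrm{Ker}\,\pi_T^n)$. Then $\pi\cdot m_+(T)\subset m_-(T)\subset m_+(T)$, and there are $R$-module isomorphisms $m_+(T)\simeq T/m_-(T)$ and $m_-(T)\simeq T/m_+(T)$. *)

theory Defs
  imports Complex_Main
begin

definition dvr_uniformizer :: "'a::idom \<Rightarrow> bool" where
  "dvr_uniformizer p \<longleftrightarrow> p \<noteq> 0 \<and> \<not> p dvd 1 \<and>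
     (\<forall>x. x \<noteq> 0 \<longrightarrow> (\<exists>u n. u dvd 1 \<and> x = u * p ^ n))"

definition mult_endo :: "('a \<Rightarrow> 'b \<Rightarrow> 'b) \<Rightarrow> 'a \<Rightarrow> 'b \<Rightarrow> 'b" where
  "mult_endo scale p = scale p"

definition Im_pow :: "('a \<Rightarrow> 'b \<Rightarrow> 'b) \<Rightarrow> 'a \<Rightarrow> nat \<Rightarrow> 'b set" where
  "Im_pow scale p n = range ((mult_endo scale p) ^^ n)"

definition Ker_pow :: "('a \<Rightarrow> 'b \<Rightarrow> 'b) \<Rightarrow> 'a \<Rightarrow> nat \<Rightarrow> 'b::zero set" where
  "Ker_pow scale p n = {x. ((mult_endo scale p) ^^ n) x = 0}"

definition m_minus :: "('a::comm_ring_1 \<Rightarrow> 'b::ab_group_add \<Rightarrow> 'b) \<Rightarrow> 'a \<Rightarrow> 'b set" where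
  "m_minus scale p = module.span scale (\<Union>n. Im_pow scale p n \<inter> Ker_pow scale p n)"

definition m_plus :: "('a::comm_ring_1 \<Rightarrow> 'b::ab_group_add \<Rightarrow> 'b) \<Rightarrow> 'a \<Rightarrow> 'b set" where
  "m_plus scale p = (\<Inter>n. {x + y | x y. x \<in> Im_pow scale p n \<and> y \<in> Ker_pow scale p n})"

text \<open>Quotient module T/K (K a submodule): carrier = set of cosets x + K, with
operations (x + K) + (y + K) = (x + y) + K and r (x + K) = r x + K.\<close>
definition coset :: "'b::ab_group_add \<Rightarrow> 'b set \<Rightarrow> 'b set" where
  "coset x K = (\<lambda>k. x + k) ` K"

definition quot_carrier :: "'b::ab_group_add set \<Rightarrow> 'b set set" where
  "quot_carrier K = range (\<lambda>x. coset x K)"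

definition iso_to_quotient ::
  "('a \<Rightarrow> 'b \<Rightarrow> 'b) \<Rightarrow> 'b::ab_group_add set \<Rightarrow> 'b set \<Rightarrow> bool" where
  "iso_to_quotient scale S K \<longleftrightarrow> (\<exists>g. bij_betw g S (quot_carrier K) \<and>
     (\<forall>a\<in>S. \<forall>b\<in>S. \<forall>x y. g a = coset x K \<longrightarrow> g b = coset y K \<longrightarrow> g (a + b) = coset (x + y) K) \<and>
     (\<forall>a\<in>S. \<forall>r x. g a = coset x K \<longrightarrow> g (scale r a) = coset (scale r x) K))"

end

theory Submission
  imports Defs
begin


context module
begin

lemma iso_from_hom:
  assumes hadd: "\<And>x y. h (x + y) = h x + h y"
    and hsc: "\<And>r x. h (scale r x) = scale r (h x)"
    and S: "S = range h" and K: "K = {x. h x = 0}"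
  shows "iso_to_quotient scale S K"
proof -
  have h0: "h 0 = 0" using hsc[of 0 0] by simp
  have hneg: "h (- x) = - h x" for x using hsc[of "-1" x] by simp
  have hdiff: "h (x - y) = h x - h y" for x y using hadd[of x "- y"] hneg[of y] by simp
  have coset_eq: "coset x K = coset y K" if "h x = h y" for x y
  proof -
    have sub: "coset a K \<subseteq> coset c K" if "h a = h c" for a c
    proof
      fix z assume "z \<in> coset a K"
      then obtain k where k: "k \<in> K" "z = a + k" unfolding coset_def by blast
      have "h (a - c + k) = 0" using k(1) that unfolding K by (simp add: hadd hdiff)
      then have "a - c + k \<in> K" unfolding K by simp
      moreover have "z = c + (a - c + k)" using k(2) by simp
      ultimately show "z \<in> coset c K" unfolding coset_def by blast
    qed
    show ?thesis using sub[of x y] sub[of y x] that by auto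
  qed
  have coset_h: "h x = h y" if "coset x K = coset y K" for x y
  proof -
    have "0 \<in> K" unfolding K using h0 by simp
    then have "x \<in> coset x K" unfolding coset_def by (metis add_0_right image_eqI)
    then have "x \<in> coset y K" using that by simp
    then obtain k where "k \<in> K" "x = y + k" unfolding coset_def by blast
    then show ?thesis unfolding K by (simp add: hadd)
  qed
  define g where "g a = coset (SOME x. h x = a) K" for a
  have gS: "h (SOME x. h x = a) = a" if "a \<in> S" for a
  proof -
    have "\<exists>x. h x = a" using that S by blast
    then show ?thesis by (rule someI_ex)
  qed
  have gh: "h x = a" if "a \<in> S" "g a = coset x K" for a x
  proof -
    have "h (SOME x. h x = a) = h x" using that(2) coset_h unfolding g_def by blast
    then show ?thesis using gS[OF that(1)] by simp
  qed
  have ghx: "g (h x) = coset x K" for x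
    unfolding g_def using gS[of "h x"] S coset_eq by blast
  have bij: "bij_betw g S (quot_carrier K)"
  proof (rule bij_betw_imageI)
    show "inj_on g S"
    proof (rule inj_onI)
      fix a b assume ab: "a \<in> S" "b \<in> S" "g a = g b"
      have "h (SOME x. h x = a) = h (SOME x. h x = b)" using ab(3) coset_h unfolding g_def by blast
      then show "a = b" using gS ab(1,2) by simp
    qed
    show "g ` S = quot_carrier K"
    proof
      show "g ` S \<subseteq> quot_carrier K" unfolding quot_carrier_def g_def by blast
      show "quot_carrier K \<subseteq> g ` S"
      proof
        fix c assume "c \<in> quot_carrier K"
        then obtain x where x: "c = coset x K" unfolding quot_carrier_def by blast
        have "h x \<in> S" using S by blast
        then show "c \<in> g ` S" using x ghx by (metis image_eqI)
      qed
    qed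
  qed
  have add: "\<forall>a\<in>S. \<forall>b\<in>S. \<forall>x y. g a = coset x K \<longrightarrow> g b = coset y K \<longrightarrow> g (a + b) = coset (x + y) K"
  proof (intro ballI allI impI)
    fix a b x y assume ab: "a \<in> S" "b \<in> S" "g a = coset x K" "g b = coset y K"
    have "h (x + y) = a + b" using gh[OF ab(1,3)] gh[OF ab(2,4)] hadd by simp
    then show "g (a + b) = coset (x + y) K" using ghx[of "x + y"] by simp
  qed
  have sc: "\<forall>a\<in>S. \<forall>r x. g a = coset x K \<longrightarrow> g (scale r a) = coset (scale r x) K"
  proof (intro ballI allI impI)
    fix a r x assume a: "a \<in> S" "g a = coset x K"
    have "h (scale r x) = scale r a" using gh[OF a] hsc by simp
    then show "g (scale r a) = coset (scale r x) K" using ghx[of "scale r x"] by simp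
  qed
  show ?thesis unfolding iso_to_quotient_def using bij add sc by blast
qed

end

locale dvrm = module scale for scale :: "'a::idom \<Rightarrow> 'b::ab_group_add \<Rightarrow> 'b" +
  fixes p :: 'a and N :: nat
  assumes unif: "dvr_uniformizer p" and kill: "\<forall>t. scale (p ^ N) t = 0"
begin

lemma factor: "r \<noteq> 0 \<Longrightarrow> \<exists>u m. u dvd 1 \<and> r = u * p ^ m"
  using unif unfolding dvr_uniformizer_def by blast

lemma unit_cancel: assumes "u dvd 1" "scale u x = 0" shows "x = 0"
proof -
  obtain v where "1 = u * v" using assms(1) by (auto elim: dvdE)
  then have "x = scale (v * u) x" by (simp add: mult.commute)
  also have "\<dots> = scale v (scale u x)" by simp
  finally show ?thesis using assms(2) by simp
qed

lemma pow_zero_mono: assumes "scale (p ^ i) x = 0" "i \<le> j" shows "scale (p ^ j) x = 0"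
proof -
  have "p ^ j = p ^ (j - i) * p ^ i" using assms(2) by (simp add: power_add[symmetric])
  then have "scale (p ^ j) x = scale (p ^ (j - i)) (scale (p ^ i) x)" by simp
  then show ?thesis using assms(1) by simp
qed

definition ord :: "'b \<Rightarrow> nat" where "ord x = (LEAST k. scale (p ^ k) x = 0)"

lemma ord_kill: "scale (p ^ ord x) x = 0"
  unfolding ord_def by (rule LeastI[where k=N]) (simp add: kill)

lemma ord_least: "scale (p ^ i) x = 0 \<Longrightarrow> ord x \<le> i"
  unfolding ord_def by (rule Least_le)

lemma kill_iff: "scale (p ^ i) x = 0 \<longleftrightarrow> ord x \<le> i"
  proof
  assume "ord x \<le> i" then show "scale (p ^ i) x = 0" by (rule pow_zero_mono[OF ord_kill])
qed (rule ord_least)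

lemma KL: assumes "scale (r * p ^ i) b = 0"
  shows "\<exists>s. scale r b = scale (s * p ^ (ord b - i)) b"
proof (cases "r = 0")
  case True then have e: "scale r b = scale (0 * p ^ (ord b - i)) b" by simp
  show ?thesis by (rule exI, rule e)
next
  case False
  then obtain u m where u: "u dvd 1" "r = u * p ^ m" using factor by blast
  have "scale u (scale (p ^ (m + i)) b) = 0" using assms u by (simp add: power_add mult.assoc)
  then have "scale (p ^ (m + i)) b = 0" using unit_cancel u by blast
  then have "ord b \<le> m + i" by (rule ord_least)
  then have pm: "p ^ m = p ^ (m - (ord b - i)) * p ^ (ord b - i)" by (simp add: power_add[symmetric])
  have "r = (u * p ^ (m - (ord b - i))) * p ^ (ord b - i)" unfolding u(2) mult.assoc pm[symmetric] ..
  then have e: "scale r b = scale ((u * p ^ (m - (ord b - i))) * p ^ (ord b - i)) b" by (simp only:)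
  show ?thesis by (rule exI, rule e)
qed

lemma KL': assumes "scale r b = scale (s * p ^ (ord b - i)) b"
  shows "scale (r * p ^ i) b = 0"
proof -
  have "scale (r * p ^ i) b = scale (p ^ i) (scale r b)" by (simp add: mult.commute)
  also have "\<dots> = scale (p ^ i) (scale (s * p ^ (ord b - i)) b)" using assms by simp
  also have "\<dots> = scale ((p ^ i) * (s * p ^ (ord b - i))) b" by simp
  also have "(p ^ i) * (s * p ^ (ord b - i)) = s * p ^ (i + (ord b - i))" by (simp only: power_add mult.assoc mult.commute mult.left_commute)
  also have "scale (s * p ^ (i + (ord b - i))) b = scale s (scale (p ^ (i + (ord b - i))) b)" by simp
  also have "\<dots> = 0" using pow_zero_mono[OF ord_kill, where j="i + (ord b - i)"] by simp
  finally show ?thesis .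
qed

lemma KL_iff: "scale (r * p ^ i) b = 0 \<longleftrightarrow> (\<exists>s. scale r b = scale (s * p ^ (ord b - i)) b)"
  using KL KL' by blast


definition indep :: "'b set \<Rightarrow> bool" where
  "indep B \<longleftrightarrow> (\<forall>F r. finite F \<longrightarrow> F \<subseteq> B \<longrightarrow> (\<Sum>b\<in>F. scale (r b) b) = 0 \<longrightarrow> (\<forall>b\<in>F. scale (r b) b = 0))"

definition indep_mod :: "'b set \<Rightarrow> 'b set \<Rightarrow> bool" where
  "indep_mod A C \<longleftrightarrow> (\<forall>F r. finite F \<longrightarrow> F \<subseteq> C \<longrightarrow> (\<Sum>b\<in>F. scale (r b) b) \<in> A \<longrightarrow> (\<forall>b\<in>F. scale (r b) b = 0))"

lemma indepD: "indep B \<Longrightarrow> finite F \<Longrightarrow> F \<subseteq> B \<Longrightarrow> (\<Sum>b\<in>F. scale (r b) b) = 0 \<Longrightarrow> b \<in> F \<Longrightarrow> scale (r b) b = 0"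
  unfolding indep_def by blast

lemma indep_modD: "indep_mod A C \<Longrightarrow> finite F \<Longrightarrow> F \<subseteq> C \<Longrightarrow> (\<Sum>b\<in>F. scale (r b) b) \<in> A \<Longrightarrow> b \<in> F \<Longrightarrow> scale (r b) b = 0"
  unfolding indep_mod_def by blast

lemma complement:
  assumes A: "subspace A"
  shows "\<exists>C. C \<subseteq> S \<and> (\<forall>c\<in>C. scale p c = 0) \<and> 0 \<notin> C \<and> indep_mod A C \<and>
     (\<forall>s\<in>S. scale p s = 0 \<longrightarrow> (\<exists>a\<in>A. \<exists>v\<in>span C. s = a + v))"
proof -
  define Z where "Z = {C. C \<subseteq> S \<and> (\<forall>c\<in>C. scale p c = 0) \<and> 0 \<notin> C \<and> indep_mod A C}"
  have "\<forall>Ch\<in>chains Z. \<Union>Ch \<in> Z"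
  proof
    fix Ch assume Ch: "Ch \<in> chains Z"
    then have sub: "Ch \<subseteq> Z" and ch: "subset.chain Z Ch" unfolding chains_alt_def subset.chain_def by auto
    have i: "indep_mod A (\<Union>Ch)" unfolding indep_mod_def
    proof (intro allI impI)
      fix F r assume F: "finite F" "F \<subseteq> \<Union>Ch" "(\<Sum>b\<in>F. scale (r b) b) \<in> A"
      show "\<forall>b\<in>F. scale (r b) b = 0"
      proof (cases "F = {}")
        case True then show ?thesis by simp
      next
        case False
        then have "Ch \<noteq> {}" using F(2) by auto
        then obtain C0 where C0: "C0 \<in> Ch" "F \<subseteq> C0" using finite_subset_Union_chain[OF F(1) F(2) _ ch] by blast
        then have "indep_mod A C0" using sub unfolding Z_def by auto
        then show ?thesis using F C0 unfolding indep_mod_def by blast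
      qed
    qed
    show "\<Union>Ch \<in> Z" using sub i unfolding Z_def by auto
  qed
  then obtain M where M: "M \<in> Z" and Mmax: "\<forall>X\<in>Z. M \<subseteq> X \<longrightarrow> X = M" using Zorn_Lemma by blast
  have MS: "M \<subseteq> S" and Mp: "\<forall>c\<in>M. scale p c = 0" and M0: "0 \<notin> M" and Mi: "indep_mod A M"
    using M unfolding Z_def by auto
  have "\<exists>a\<in>A. \<exists>v\<in>span M. s = a + v" if s: "s \<in> S" "scale p s = 0" for s
  proof (rule ccontr)
    assume ns: "\<not> (\<exists>a\<in>A. \<exists>v\<in>span M. s = a + v)"
    have s0: "s \<noteq> 0"
    proof
      assume "s = 0" then have "s = 0 + 0" by simp
      then show False using ns subspace_0[OF A] span_zero by blast
    qed
    have iM: "indep_mod A (insert s M)" unfolding indep_mod_def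
    proof (intro allI impI)
      fix F r assume F: "finite F" "F \<subseteq> insert s M" "(\<Sum>b\<in>F. scale (r b) b) \<in> A"
      show "\<forall>b\<in>F. scale (r b) b = 0"
      proof (cases "s \<in> F")
        case False
        then have "F \<subseteq> M" using F(2) by auto
        then show ?thesis using F(1,3) Mi unfolding indep_mod_def by blast
      next
        case True
        have split: "(\<Sum>b\<in>F. scale (r b) b) = scale (r s) s + (\<Sum>b\<in>F - {s}. scale (r b) b)"
          using F(1) True by (simp add: sum.remove)
        have Fs: "F - {s} \<subseteq> M" using F(2) by auto
        have rs: "scale (r s) s = 0"
        proof (rule ccontr)
          assume nz: "scale (r s) s \<noteq> 0"
          then have "r s \<noteq> 0" by auto
          then obtain u m where u: "u dvd 1" "r s = u * p ^ m" using factor by blast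
          have m0: "m = 0"
          proof (rule ccontr)
            assume "m \<noteq> 0"
            then have "p ^ m = p ^ (m - 1) * p" by (simp add: power_eq_if)
            then have "scale (r s) s = scale (u * p ^ (m - 1)) (scale p s)" using u(2) by (simp add: mult.assoc)
            then show False using nz s(2) by simp
          qed
          obtain v where v: "1 = u * v" using u(1) by (auto elim: dvdE)
          have sv: "s = scale v (scale (r s) s)" using u(2) m0 v by (simp add: mult.commute)
          also have "scale (r s) s = (\<Sum>b\<in>F. scale (r b) b) - (\<Sum>b\<in>F - {s}. scale (r b) b)"
            using split by simp
          finally have "s = scale v (\<Sum>b\<in>F. scale (r b) b) + (- scale v (\<Sum>b\<in>F - {s}. scale (r b) b))"
            by (simp add: scale_right_diff_distrib)
          moreover have "scale v (\<Sum>b\<in>F. scale (r b) b) \<in> A" using F(3) A by (rule subspace_scale[rotated])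
          moreover have "- scale v (\<Sum>b\<in>F - {s}. scale (r b) b) \<in> span M"
            using Fs by (intro span_neg span_scale span_sum) (auto intro: span_base)
          ultimately show False using ns by blast
        qed
        have "(\<Sum>b\<in>F - {s}. scale (r b) b) \<in> A" using F(3) split rs by simp
        then have "\<forall>b\<in>F - {s}. scale (r b) b = 0" using Mi Fs F(1) unfolding indep_mod_def by blast
        then show ?thesis using rs by blast
      qed
    qed
    have "insert s M \<in> Z" unfolding Z_def using MS Mp M0 s s0 iM by auto
    then have "insert s M = M" using Mmax by blast
    then have "s \<in> span M" using span_base by blast
    moreover have "s = 0 + s" by simp
    ultimately show False using ns subspace_0[OF A] by blast
  qed
  then show ?thesis using MS Mp M0 Mi by blast
qed


lemma struct_thm:
  "\<forall>S. subspace S \<longrightarrow> (\<forall>t\<in>S. scale (p ^ n) t = 0) \<longrightarrow> (\<exists>B. B \<subseteq> S \<and> 0 \<notin> B \<and> indep B \<and> S \<subseteq> span B)"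
proof (induction n)
  case 0
  show ?case
  proof (intro allI impI)
    fix S :: "'b set" assume "subspace S" "\<forall>t\<in>S. scale (p ^ 0) t = 0"
    then have "S \<subseteq> span {}" using span_zero by auto
    moreover have "indep {}" unfolding indep_def by auto
    ultimately show "\<exists>B. B \<subseteq> S \<and> 0 \<notin> B \<and> indep B \<and> S \<subseteq> span B" by blast
  qed
next
  case (Suc n)
  show ?case
  proof (intro allI impI)
    fix S :: "'b set" assume S: "subspace S" and kS: "\<forall>t\<in>S. scale (p ^ Suc n) t = 0"
    define S' where "S' = scale p ` S"
    have sS': "subspace S'"
    proof (rule subspaceI)
      show "0 \<in> S'" unfolding S'_def using subspace_0[OF S] by (intro image_eqI[of _ _ 0]) simp_all
    next
      fix x y assume "x \<in> S'" "y \<in> S'"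
      then obtain a b where ab: "a \<in> S" "b \<in> S" "x = scale p a" "y = scale p b" unfolding S'_def by blast
      then have "x + y = scale p (a + b)" by (simp add: scale_right_distrib)
      moreover have "a + b \<in> S" using ab S subspace_add by blast
      ultimately show "x + y \<in> S'" unfolding S'_def by blast
    next
      fix c x assume "x \<in> S'"
      then obtain a where a: "a \<in> S" "x = scale p a" unfolding S'_def by blast
      then have "scale c x = scale p (scale c a)" by (simp add: mult.commute)
      moreover have "scale c a \<in> S" using a S subspace_scale by blast
      ultimately show "scale c x \<in> S'" unfolding S'_def by blast
    qed
    have kS': "\<forall>t\<in>S'. scale (p ^ n) t = 0"
    proof
      fix t assume "t \<in> S'"
      then obtain a where a: "a \<in> S" "t = scale p a" unfolding S'_def by blast
      have "scale (p ^ n) t = scale (p ^ Suc n) a" using a(2) by (simp add: mult.commute)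
      then show "scale (p ^ n) t = 0" using kS a(1) by simp
    qed
    have "\<exists>B. B \<subseteq> S' \<and> 0 \<notin> B \<and> indep B \<and> S' \<subseteq> span B"
      using Suc.IH sS' kS' by simp
    then obtain B' where B': "B' \<subseteq> S'" "0 \<notin> B'" "indep B'" "S' \<subseteq> span B'"
      by (elim exE conjE) simp
    define xf where "xf y = (SOME x. x \<in> S \<and> scale p x = y)" for y
    have xf: "xf y \<in> S \<and> scale p (xf y) = y" if "y \<in> B'" for y
    proof -
      have "\<exists>x. x \<in> S \<and> scale p x = y" using that B'(1) unfolding S'_def by blast
      then show ?thesis unfolding xf_def by (rule someI_ex)
    qed
    have injx: "inj_on xf B'"
    proof (rule inj_onI)
      fix y z assume "y \<in> B'" "z \<in> B'" "xf y = xf z"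
      then have "scale p (xf y) = scale p (xf z)" by simp
      then show "y = z" using xf \<open>y \<in> B'\<close> \<open>z \<in> B'\<close> by simp
    qed
    define X where "X = xf ` B'"
    define A where "A = span X"
    have XS: "X \<subseteq> S" unfolding X_def using xf by blast
    have sA: "subspace A" unfolding A_def by simp
    have AS: "A \<subseteq> S" unfolding A_def using span_minimal[OF XS S] .
    have XA: "X \<subseteq> A" unfolding A_def by (rule span_superset)
    obtain C where C: "C \<subseteq> S" "\<forall>c\<in>C. scale p c = 0" "0 \<notin> C" "indep_mod A C"
      "\<forall>s\<in>S. scale p s = 0 \<longrightarrow> (\<exists>a\<in>A. \<exists>v\<in>span C. s = a + v)"
      using complement[OF sA, of S] by blast
    have X0: "0 \<notin> X"
    proof
      assume "0 \<in> X"
      then obtain y where "y \<in> B'" "0 = xf y" unfolding X_def by (rule imageE) simp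
      then have "y = scale p 0" using xf[of y] by simp
      then have "y = 0" by simp
      then show False using B'(2) \<open>y \<in> B'\<close> by simp
    qed
    have XC: "X \<inter> C = {}"
    proof (rule ccontr)
      assume "X \<inter> C \<noteq> {}"
      then obtain c where c: "c \<in> X" "c \<in> C" by blast
      have "(\<Sum>b\<in>{c}. scale ((\<lambda>_. 1) b) b) \<in> A" using c XA by auto
      then have "scale ((\<lambda>_. 1) c) c = 0" using indep_modD[OF C(4), of "{c}" "\<lambda>_. 1" c] c(2) by simp
      then have "c = 0" by simp
      then show False using c C(3) by simp
    qed
    have indB: "indep (X \<union> C)" unfolding indep_def
    proof (intro allI impI)
      fix F r assume F: "finite F" "F \<subseteq> X \<union> C" "(\<Sum>b\<in>F. scale (r b) b) = 0"
      define FX where "FX = F \<inter> X"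
      define FC where "FC = F \<inter> C"
      have FU: "F = FX \<union> FC" using F(2) unfolding FX_def FC_def by blast
      have FD: "FX \<inter> FC = {}" using XC unfolding FX_def FC_def by blast
      have fin: "finite FX" "finite FC" using F(1) unfolding FX_def FC_def by auto
      have sum0: "(\<Sum>b\<in>FX. scale (r b) b) + (\<Sum>b\<in>FC. scale (r b) b) = 0"
        using F(3) sum.union_disjoint[OF fin FD, of "\<lambda>b. scale (r b) b"] FU by simp
      define G where "G = {y\<in>B'. xf y \<in> F}"
      have FXG: "FX = xf ` G" unfolding FX_def G_def X_def by blast
      have injG: "inj_on xf G" using injx unfolding G_def by (rule inj_on_subset) auto
      have finG: "finite G" using finite_image_iff[OF injG] fin(1) FXG by simp
      have GB: "G \<subseteq> B'" unfolding G_def by auto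
      have sumX: "(\<Sum>b\<in>FX. scale (r b) b) = (\<Sum>y\<in>G. scale (r (xf y)) (xf y))"
        unfolding FXG using sum.reindex[OF injG, of "\<lambda>b. scale (r b) b"] by simp
      have pFC: "scale p (\<Sum>b\<in>FC. scale (r b) b) = 0"
      proof -
        have "scale p (\<Sum>b\<in>FC. scale (r b) b) = (\<Sum>b\<in>FC. scale (r b) (scale p b))"
          by (simp add: scale_sum_right mult.commute)
        also have "\<dots> = 0" using C(2) unfolding FC_def by (intro sum.neutral) auto
        finally show ?thesis .
      qed
      have pG: "(\<Sum>y\<in>G. scale (r (xf y)) y) = 0"
      proof -
        have "(\<Sum>y\<in>G. scale (r (xf y)) y) = (\<Sum>y\<in>G. scale p (scale (r (xf y)) (xf y)))"
        proof (rule sum.cong[OF refl])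
          fix y assume "y \<in> G"
          then have e: "scale p (xf y) = y" using xf GB by blast
          have "scale p (scale (r (xf y)) (xf y)) = scale (r (xf y)) (scale p (xf y))" by (rule scale_left_commute)
          then show "scale (r (xf y)) y = scale p (scale (r (xf y)) (xf y))" using e by simp
        qed
        also have "\<dots> = scale p (\<Sum>b\<in>FX. scale (r b) b)" unfolding sumX by (simp add: scale_sum_right)
        also have "(\<Sum>b\<in>FX. scale (r b) b) = - (\<Sum>b\<in>FC. scale (r b) b)"
          using sum0 by (simp add: eq_neg_iff_add_eq_0)
        also have "scale p (- (\<Sum>b\<in>FC. scale (r b) b)) = 0" using pFC by simp
        finally show ?thesis .
      qed
      have zG: "\<forall>y\<in>G. scale (r (xf y)) y = 0" using indepD[OF B'(3) finG GB pG] by blast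
      have "\<forall>y\<in>G. \<exists>k. r (xf y) = p * k"
      proof
        fix y assume y: "y \<in> G"
        show "\<exists>k. r (xf y) = p * k"
        proof (cases "r (xf y) = 0")
          case True then show ?thesis by (intro exI[of _ 0]) simp
        next
          case False
          then obtain u m where u: "u dvd 1" "r (xf y) = u * p ^ m" using factor by blast
          show ?thesis
          proof (cases m)
            case 0
            have "scale (r (xf y)) y = 0" using zG y by blast
            then have "scale u y = 0" using u(2) 0 by simp
            then have "y = 0" using unit_cancel u(1) by blast
            then show ?thesis using y GB B'(2) by auto
          next
            case (Suc m')
            then have "r (xf y) = p * (u * p ^ m')" using u(2) by (simp add: ac_simps)
            then show ?thesis by (rule exI)
          qed
        qed
      qed
      from bchoice[OF this] obtain sf where sf: "\<forall>y\<in>G. r (xf y) = p * sf y" by blast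
      have sumX2: "(\<Sum>b\<in>FX. scale (r b) b) = (\<Sum>y\<in>G. scale (sf y) y)"
        unfolding sumX
      proof (rule sum.cong)
        fix y assume y: "y \<in> G"
        have "scale (r (xf y)) (xf y) = scale (sf y) (scale p (xf y))" using sf y by (simp add: mult.commute)
        also have "\<dots> = scale (sf y) y"
        proof -
          have e: "scale p (xf y) = y" using xf y GB by blast
          show ?thesis by (simp only: e)
        qed
        finally show "scale (r (xf y)) (xf y) = scale (sf y) y" .
      qed simp
      have "(\<Sum>y\<in>G. scale (sf y) y) \<in> A"
      proof (rule subspace_sum[OF sA])
        fix y assume y: "y \<in> G"
        have "xf y \<in> A" using y GB XA unfolding X_def by blast
        then have "scale p (xf y) \<in> A" using sA subspace_scale by blast
        then have "y \<in> A" using xf y GB by auto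
        then show "scale (sf y) y \<in> A" using sA subspace_scale by blast
      qed
      moreover have "(\<Sum>b\<in>FC. scale (r b) b) = - (\<Sum>b\<in>FX. scale (r b) b)"
        using add_eq_0_iff[THEN iffD1, OF sum0] .
      ultimately have inA: "(\<Sum>b\<in>FC. scale (r b) b) \<in> A"
        using sumX2 subspace_neg[OF sA] by simp
      have FCC: "FC \<subseteq> C" unfolding FC_def by blast
      have zC: "\<forall>b\<in>FC. scale (r b) b = 0" using indep_modD[OF C(4) fin(2) FCC inA] by blast
      then have "(\<Sum>b\<in>FC. scale (r b) b) = 0" by simp
      then have sG0: "(\<Sum>y\<in>G. scale (sf y) y) = 0" using sum0 sumX2 by simp
      have zG2: "\<forall>y\<in>G. scale (sf y) y = 0" using indepD[OF B'(3) finG GB sG0] by blast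
      have zX: "\<forall>b\<in>FX. scale (r b) b = 0"
      proof
        fix b assume "b \<in> FX"
        then obtain y where y: "y \<in> G" "b = xf y" unfolding FXG by blast
        have "scale (r b) b = scale (sf y) (scale p (xf y))" using sf y by (simp add: mult.commute)
        also have "\<dots> = scale (sf y) y"
        proof -
          have e: "scale p (xf y) = y" using xf y GB by blast
          show ?thesis by (simp only: e)
        qed
        finally show "scale (r b) b = 0" using zG2 y by simp
      qed
      show "\<forall>b\<in>F. scale (r b) b = 0" using zX zC FU by blast
    qed
    have spB: "S \<subseteq> span (X \<union> C)"
    proof
      fix t assume t: "t \<in> S"
      then have "scale p t \<in> span B'" using B'(4) unfolding S'_def by blast
      then obtain G r where G: "finite G" "G \<subseteq> B'" "scale p t = (\<Sum>y\<in>G. scale (r y) y)"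
        unfolding span_explicit by blast
      define a where "a = (\<Sum>y\<in>G. scale (r y) (xf y))"
      have aA: "a \<in> A" unfolding a_def
        using G(2) XA unfolding X_def by (intro subspace_sum[OF sA] subspace_scale[OF sA]) blast
      have "scale p a = (\<Sum>y\<in>G. scale (r y) (scale p (xf y)))"
        unfolding a_def by (simp add: scale_sum_right mult.commute)
      also have "\<dots> = scale p t" unfolding G(3)
      proof (rule sum.cong[OF refl])
        fix y assume "y \<in> G"
        then have e: "scale p (xf y) = y" using xf G(2) by blast
        show "scale (r y) (scale p (xf y)) = scale (r y) y" by (simp only: e)
      qed
      finally have "scale p (t - a) = 0" by (simp add: scale_right_diff_distrib)
      moreover have "t - a \<in> S" using t aA AS S subspace_diff by blast
      ultimately obtain a' v where av: "a' \<in> A" "v \<in> span C" "t - a = a' + v" using C(5) by blast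
      have "t = (a + a') + v" using av(3) by (simp add: algebra_simps)
      moreover have "a + a' \<in> span (X \<union> C)" using aA av(1) span_mono[of X "X \<union> C"] unfolding A_def
        by (intro span_add) auto
      moreover have "v \<in> span (X \<union> C)" using av(2) span_mono[of C "X \<union> C"] by auto
      ultimately show "t \<in> span (X \<union> C)" using span_add by simp
    qed
    show "\<exists>B. B \<subseteq> S \<and> 0 \<notin> B \<and> indep B \<and> S \<subseteq> span B"
      using XS C(1) X0 C(3) indB spB by (intro exI[of _ "X \<union> C"]) auto
  qed
qed

end


locale dvrb = dvrm scale p N for scale :: "'a::idom \<Rightarrow> 'b::ab_group_add \<Rightarrow> 'b" and p N +
  fixes B :: "'b set"
  assumes indB: "indep B" and spanB: "\<And>t. t \<in> span B"
begin

definition coef :: "'b \<Rightarrow> 'b \<Rightarrow> 'a" where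
  "coef t = (SOME f. finite {b. f b \<noteq> 0} \<and> {b. f b \<noteq> 0} \<subseteq> B \<and> t = (\<Sum>b | f b \<noteq> 0. scale (f b) b))"

definition supp :: "'b \<Rightarrow> 'b set" where "supp t = {b. coef t b \<noteq> 0}"

lemma coef: "finite (supp t) \<and> supp t \<subseteq> B \<and> t = (\<Sum>b\<in>supp t. scale (coef t b) b)"
proof -
  have "\<exists>f. finite {b. f b \<noteq> 0} \<and> {b. f b \<noteq> 0} \<subseteq> B \<and> t = (\<Sum>b | f b \<noteq> 0. scale (f b) b)"
    using spanB[of t] unfolding span_alt by blast
  then have "finite {b. coef t b \<noteq> 0} \<and> {b. coef t b \<noteq> 0} \<subseteq> B \<and> t = (\<Sum>b | coef t b \<noteq> 0. scale (coef t b) b)"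
    unfolding coef_def by (rule someI_ex)
  then show ?thesis unfolding supp_def .
qed

lemma supp_fin: "finite (supp t)" and supp_B: "supp t \<subseteq> B"
  and coef_rep: "t = (\<Sum>b\<in>supp t. scale (coef t b) b)"
  using coef by blast+

lemma not_supp: "b \<notin> supp t \<Longrightarrow> coef t b = 0"
  unfolding supp_def by simp

lemma rep_sum: assumes "finite G" "supp t \<subseteq> G" shows "t = (\<Sum>b\<in>G. scale (coef t b) b)"
proof -
  have "(\<Sum>b\<in>G. scale (coef t b) b) = (\<Sum>b\<in>supp t. scale (coef t b) b)"
    using assms not_supp by (intro sum.mono_neutral_right) auto
  then show ?thesis using coef_rep[of t] by simp
qed

lemma uniq: assumes G: "finite G" "G \<subseteq> B" and t: "t = (\<Sum>b\<in>G. scale (s b) b)"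
  shows "scale (if b \<in> G then s b else 0) b = scale (coef t b) b"
proof -
  define H where "H = G \<union> supp t"
  define s' where "s' b = (if b \<in> G then s b else 0)" for b
  have finH: "finite H" and HB: "H \<subseteq> B" using G supp_fin supp_B unfolding H_def by auto
  have t1: "t = (\<Sum>b\<in>H. scale (s' b) b)"
  proof -
    have "(\<Sum>b\<in>H. scale (s' b) b) = (\<Sum>b\<in>G. scale (s b) b)"
      using finH unfolding H_def s'_def by (intro sum.mono_neutral_cong_right) auto
    then show ?thesis using t by simp
  qed
  have t2: "t = (\<Sum>b\<in>H. scale (coef t b) b)" using finH unfolding H_def by (intro rep_sum) auto
  have "(\<Sum>b\<in>H. scale (s' b - coef t b) b) = (\<Sum>b\<in>H. scale (s' b) b) - (\<Sum>b\<in>H. scale (coef t b) b)"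
    by (simp add: scale_left_diff_distrib sum_subtractf)
  also have "\<dots> = 0" using t1 t2 by simp
  finally have z: "(\<Sum>b\<in>H. scale (s' b - coef t b) b) = 0" .
  show ?thesis
  proof (cases "b \<in> H")
    case True
    have "scale (s' b - coef t b) b = 0" using indepD[OF indB finH HB z True] .
    then show ?thesis unfolding s'_def by (simp add: scale_left_diff_distrib)
  next
    case False
    then have "b \<notin> G" "b \<notin> supp t" unfolding H_def by auto
    then show ?thesis using not_supp by simp
  qed
qed

lemma scale_eq_mult: assumes "scale x b = scale y b" shows "scale (x * q) b = scale (y * q) b"
proof -
  have "scale (x * q) b = scale q (scale x b)" by (simp add: mult.commute)
  also have "\<dots> = scale q (scale y b)" using assms by simp
  also have "\<dots> = scale (y * q) b" by (simp add: mult.commute)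
  finally show ?thesis .
qed

definition hmap :: "('b \<Rightarrow> nat) \<Rightarrow> 'b \<Rightarrow> 'b" where
  "hmap j t = (\<Sum>b\<in>supp t. scale (coef t b * p ^ j b) b)"

lemma W: assumes G: "finite G" "G \<subseteq> B" and t: "t = (\<Sum>b\<in>G. scale (s b) b)"
  shows "hmap j t = (\<Sum>b\<in>G. scale (s b * p ^ j b) b)"
proof -
  define H where "H = G \<union> supp t"
  have finH: "finite H" using G supp_fin unfolding H_def by auto
  have "hmap j t = (\<Sum>b\<in>H. scale (coef t b * p ^ j b) b)"
    unfolding hmap_def using finH not_supp unfolding H_def by (intro sum.mono_neutral_left) auto
  also have "\<dots> = (\<Sum>b\<in>H. scale ((if b \<in> G then s b else 0) * p ^ j b) b)"
  proof (rule sum.cong[OF refl])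
    fix b
    show "scale (coef t b * p ^ j b) b = scale ((if b \<in> G then s b else 0) * p ^ j b) b"
      using scale_eq_mult[OF uniq[OF G t, of b, symmetric]] .
  qed
  also have "\<dots> = (\<Sum>b\<in>G. scale (s b * p ^ j b) b)"
    using finH unfolding H_def by (intro sum.mono_neutral_cong_right) auto
  finally show ?thesis .
qed

lemma hadd: "hmap j (x + y) = hmap j x + hmap j y"
proof -
  define G where "G = supp x \<union> supp y"
  have G: "finite G" "G \<subseteq> B" unfolding G_def using supp_fin supp_B by auto
  have rx: "x = (\<Sum>b\<in>G. scale (coef x b) b)" using G(1) by (intro rep_sum) (auto simp: G_def)
  have ry: "y = (\<Sum>b\<in>G. scale (coef y b) b)" using G(1) by (intro rep_sum) (auto simp: G_def)
  have "x + y = (\<Sum>b\<in>G. scale (coef x b + coef y b) b)"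
    using rx ry by (simp add: scale_left_distrib sum.distrib)
  then have "hmap j (x + y) = (\<Sum>b\<in>G. scale ((coef x b + coef y b) * p ^ j b) b)"
    by (rule W[OF G])
  also have "\<dots> = (\<Sum>b\<in>G. scale (coef x b * p ^ j b) b) + (\<Sum>b\<in>G. scale (coef y b * p ^ j b) b)"
    by (simp add: distrib_right scale_left_distrib sum.distrib)
  also have "\<dots> = hmap j x + hmap j y" using W[OF G rx, of j] W[OF G ry, of j] by simp
  finally show ?thesis .
qed

lemma hscale: "hmap j (scale a x) = scale a (hmap j x)"
proof -
  have G: "finite (supp x)" "supp x \<subseteq> B" using supp_fin supp_B by auto
  have "scale a x = scale a (\<Sum>b\<in>supp x. scale (coef x b) b)" using coef_rep[of x] by simp
  also have "\<dots> = (\<Sum>b\<in>supp x. scale (a * coef x b) b)" by (simp add: scale_sum_right)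
  finally have "hmap j (scale a x) = (\<Sum>b\<in>supp x. scale (a * coef x b * p ^ j b) b)" by (rule W[OF G])
  also have "\<dots> = scale a (hmap j x)" unfolding hmap_def by (simp add: scale_sum_right mult.assoc)
  finally show ?thesis .
qed

lemma hzero: "hmap j 0 = 0"
  using hscale[of j 0 0] by simp

lemma hconst: "hmap (\<lambda>_. n) x = scale (p ^ n) x"
proof -
  have "scale (p ^ n) x = scale (p ^ n) (\<Sum>b\<in>supp x. scale (coef x b) b)" using coef_rep[of x] by simp
  also have "\<dots> = hmap (\<lambda>_. n) x" unfolding hmap_def by (simp add: scale_sum_right mult.commute)
  finally show ?thesis by simp
qed

lemma range_iff: "t \<in> range (hmap j) \<longleftrightarrow> (\<forall>b. \<exists>s. scale (coef t b) b = scale (s * p ^ j b) b)"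
proof
  assume "t \<in> range (hmap j)"
  then obtain u where u: "t = hmap j u" by blast
  have G: "finite (supp u)" "supp u \<subseteq> B" using supp_fin supp_B by auto
  have t: "t = (\<Sum>b\<in>supp u. scale (coef u b * p ^ j b) b)" using u unfolding hmap_def .
  show "\<forall>b. \<exists>s. scale (coef t b) b = scale (s * p ^ j b) b"
  proof
    fix b
    have e: "scale (if b \<in> supp u then coef u b * p ^ j b else 0) b = scale (coef t b) b"
      by (rule uniq[OF G t])
    show "\<exists>s. scale (coef t b) b = scale (s * p ^ j b) b"
    proof (cases "b \<in> supp u")
      case True
      then have "scale (coef t b) b = scale (coef u b * p ^ j b) b" using e by simp
      then show ?thesis by (rule exI)
    next
      case False
      then have "scale (coef t b) b = scale (0 * p ^ j b) b" using e by simp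
      then show ?thesis by (rule exI)
    qed
  qed
next
  assume "\<forall>b. \<exists>s. scale (coef t b) b = scale (s * p ^ j b) b"
  then obtain sf where sf: "\<And>b. scale (coef t b) b = scale (sf b * p ^ j b) b" by metis
  have G: "finite (supp t)" "supp t \<subseteq> B" using supp_fin supp_B by auto
  have "hmap j (\<Sum>b\<in>supp t. scale (sf b) b) = (\<Sum>b\<in>supp t. scale (sf b * p ^ j b) b)"
    by (rule W[OF G refl])
  also have "\<dots> = (\<Sum>b\<in>supp t. scale (coef t b) b)" using sf by simp
  also have "\<dots> = t" using coef_rep[of t] by simp
  finally show "t \<in> range (hmap j)" by (metis rangeI)
qed

lemma ker_iff: "hmap j t = 0 \<longleftrightarrow> (\<forall>b. scale (coef t b * p ^ j b) b = 0)"
proof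
  assume h: "hmap j t = 0"
  have G: "finite (supp t)" "supp t \<subseteq> B" using supp_fin supp_B by auto
  show "\<forall>b. scale (coef t b * p ^ j b) b = 0"
  proof
    fix b
    show "scale (coef t b * p ^ j b) b = 0"
    proof (cases "b \<in> supp t")
      case True
      show ?thesis using indepD[OF indB G h[unfolded hmap_def] True] .
    next
      case False then show ?thesis using not_supp by simp
    qed
  qed
next
  assume "\<forall>b. scale (coef t b * p ^ j b) b = 0"
  then show "hmap j t = 0" unfolding hmap_def by simp
qed

lemma hmono: assumes "\<And>b. j' b \<le> j b" shows "hmap j u \<in> range (hmap j')"
proof -
  have G: "finite (supp u)" "supp u \<subseteq> B" using supp_fin supp_B by auto
  have "hmap j' (\<Sum>b\<in>supp u. scale (coef u b * p ^ (j b - j' b)) b)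
      = (\<Sum>b\<in>supp u. scale (coef u b * p ^ (j b - j' b) * p ^ j' b) b)"
    by (rule W[OF G refl])
  also have "\<dots> = hmap j u" unfolding hmap_def
  proof (rule sum.cong[OF refl])
    fix b
    have "p ^ (j b - j' b) * p ^ j' b = p ^ j b" using assms[of b] by (simp add: power_add[symmetric])
    then show "scale (coef u b * p ^ (j b - j' b) * p ^ j' b) b = scale (coef u b * p ^ j b) b"
      by (simp add: mult.assoc)
  qed
  finally show ?thesis by (metis rangeI)
qed

lemma hshift: "scale p (hmap j u) = hmap (\<lambda>b. Suc (j b)) u"
  unfolding hmap_def by (simp add: scale_sum_right mult.commute mult.left_commute)

lemma hsub: "subspace (range (hmap j))"
proof (rule subspaceI)
  show "0 \<in> range (hmap j)" using hzero by (metis rangeI)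
next
  fix x y assume "x \<in> range (hmap j)" "y \<in> range (hmap j)"
  then obtain a b where "x = hmap j a" "y = hmap j b" by blast
  then have "x + y = hmap j (a + b)" by (simp add: hadd)
  then show "x + y \<in> range (hmap j)" by (metis rangeI)
next
  fix c x assume "x \<in> range (hmap j)"
  then obtain a where "x = hmap j a" by blast
  then have "scale c x = hmap j (scale c a)" by (simp add: hscale)
  then show "scale c x \<in> range (hmap j)" by (metis rangeI)
qed

end


context dvrb
begin

definition jf :: "'b \<Rightarrow> nat" where "jf b = ord b div 2"
definition jc :: "'b \<Rightarrow> nat" where "jc b = ord b - ord b div 2"

lemma ker_jf: "{t. hmap jf t = 0} = range (hmap jc)"
proof -
  have "hmap jf t = 0 \<longleftrightarrow> t \<in> range (hmap jc)" for t
  proof -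
    have "ord b - jf b = jc b" for b unfolding jf_def jc_def by simp
    then show ?thesis unfolding ker_iff range_iff KL_iff by simp
  qed
  then show ?thesis by blast
qed

lemma ker_jc: "{t. hmap jc t = 0} = range (hmap jf)"
proof -
  have "hmap jc t = 0 \<longleftrightarrow> t \<in> range (hmap jf)" for t
  proof -
    have "ord b - jc b = jf b" for b unfolding jf_def jc_def by simp
    then show ?thesis unfolding ker_iff range_iff KL_iff by simp
  qed
  then show ?thesis by blast
qed

lemma funpow_scale: "(mult_endo scale p ^^ n) x = scale (p ^ n) x"
  by (induction n) (simp_all add: mult_endo_def)

lemma Im_pow_eq: "Im_pow scale p n = range (scale (p ^ n))"
  unfolding Im_pow_def funpow_scale by (simp add: fun_eq_iff[symmetric] funpow_scale)

lemma Ker_pow_eq: "Ker_pow scale p n = {x. scale (p ^ n) x = 0}"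
  unfolding Ker_pow_def funpow_scale by simp

lemma m_minus_eq: "m_minus scale p = range (hmap jc)"
proof
  show "m_minus scale p \<subseteq> range (hmap jc)" unfolding m_minus_def
  proof (rule span_minimal[OF _ hsub])
    show "(\<Union>n. Im_pow scale p n \<inter> Ker_pow scale p n) \<subseteq> range (hmap jc)"
    proof
      fix t assume "t \<in> (\<Union>n. Im_pow scale p n \<inter> Ker_pow scale p n)"
      then obtain n x where nx: "t = scale (p ^ n) x" "scale (p ^ n) t = 0"
        unfolding Im_pow_eq Ker_pow_eq by blast
      have t1: "t \<in> range (hmap (\<lambda>_. n))" using nx(1) hconst by (metis rangeI)
      have t2: "hmap (\<lambda>_. n) t = 0" using nx(2) hconst by simp
      have "\<exists>s. scale (coef t b) b = scale (s * p ^ jc b) b" for b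
      proof -
        obtain s where s: "scale (coef t b) b = scale (s * p ^ n) b" using t1 unfolding range_iff by blast
        have "scale (coef t b * p ^ n) b = 0" using t2 unfolding ker_iff by blast
        then obtain s' where s': "scale (coef t b) b = scale (s' * p ^ (ord b - n)) b" using KL by blast
        show ?thesis
        proof (cases "jc b \<le> n")
          case True
          then have "p ^ n = p ^ (n - jc b) * p ^ jc b" by (simp add: power_add[symmetric])
          then have "scale (coef t b) b = scale ((s * p ^ (n - jc b)) * p ^ jc b) b" using s by (simp add: mult.assoc)
          then show ?thesis by (rule exI)
        next
          case False
          then have "jc b \<le> ord b - n" unfolding jc_def by linarith
          then have "ord b - n = (ord b - n - jc b) + jc b" by simp
          then have "p ^ (ord b - n) = p ^ (ord b - n - jc b) * p ^ jc b" by (metis power_add)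
          then have "scale (coef t b) b = scale ((s' * p ^ (ord b - n - jc b)) * p ^ jc b) b" using s' by (simp add: mult.assoc)
          then show ?thesis by (rule exI)
        qed
      qed
      then show "t \<in> range (hmap jc)" unfolding range_iff by blast
    qed
  qed
next
  show "range (hmap jc) \<subseteq> m_minus scale p"
  proof
    fix t assume "t \<in> range (hmap jc)"
    then obtain u where u: "t = hmap jc u" by blast
    have gen: "scale (p ^ jc b) b \<in> (\<Union>n. Im_pow scale p n \<inter> Ker_pow scale p n)" for b
    proof -
      have "scale (p ^ jc b) (scale (p ^ jc b) b) = scale (p ^ (jc b + jc b)) b" by (simp add: power_add)
      also have "\<dots> = 0" unfolding kill_iff jc_def by simp
      finally have "scale (p ^ jc b) b \<in> Im_pow scale p (jc b) \<inter> Ker_pow scale p (jc b)"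
        unfolding Im_pow_eq Ker_pow_eq by blast
      then show ?thesis by blast
    qed
    have "t = (\<Sum>b\<in>supp u. scale (coef u b) (scale (p ^ jc b) b))" unfolding u hmap_def by simp
    also have "\<dots> \<in> m_minus scale p" unfolding m_minus_def
      by (intro span_sum span_scale span_base gen)
    finally show "t \<in> m_minus scale p" .
  qed
qed

lemma m_plus_eq: "m_plus scale p = range (hmap jf)"
proof
  show "range (hmap jf) \<subseteq> m_plus scale p"
  proof
    fix t assume "t \<in> range (hmap jf)"
    then obtain u where u: "t = hmap jf u" by blast
    show "t \<in> m_plus scale p" unfolding m_plus_def Im_pow_eq Ker_pow_eq
    proof (rule InterI, clarify)
      fix n
      define P where "P = {b \<in> supp u. n \<le> jf b}"
      define g where "g b = scale (coef u b * p ^ jf b) b" for b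
      have PS: "P \<subseteq> supp u" unfolding P_def by blast
      have tsplit: "t = (\<Sum>b\<in>P. g b) + (\<Sum>b\<in>supp u - P. g b)"
        unfolding u hmap_def g_def using sum.subset_diff[OF PS supp_fin, of g] by (simp add: g_def add.commute)
      have x: "(\<Sum>b\<in>P. g b) = scale (p ^ n) (\<Sum>b\<in>P. scale (coef u b * p ^ (jf b - n)) b)"
        unfolding scale_sum_right
      proof (rule sum.cong[OF refl])
        fix b assume "b \<in> P"
        then have "n + (jf b - n) = jf b" unfolding P_def by simp
        then have "p ^ n * p ^ (jf b - n) = p ^ jf b" by (metis power_add)
        then have eq: "p ^ n * (coef u b * p ^ (jf b - n)) = coef u b * p ^ jf b"
          by (simp add: mult.left_commute)
        show "g b = scale (p ^ n) (scale (coef u b * p ^ (jf b - n)) b)" unfolding g_def scale_scale eq ..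
      qed
      have y: "scale (p ^ n) (\<Sum>b\<in>supp u - P. g b) = 0"
        unfolding scale_sum_right
      proof (rule sum.neutral, rule ballI)
        fix b assume "b \<in> supp u - P"
        then have "jf b < n" unfolding P_def by auto
        then have "ord b \<le> n + jf b" unfolding jf_def by linarith
        then have k: "scale (p ^ (n + jf b)) b = 0" unfolding kill_iff .
        have "scale (p ^ n) (g b) = scale (coef u b) (scale (p ^ (n + jf b)) b)" unfolding g_def
          by (simp add: power_add mult.commute mult.left_commute)
        then show "scale (p ^ n) (g b) = 0" using k by simp
      qed
      show "\<exists>x y. t = x + y \<and> x \<in> range (scale (p ^ n)) \<and> y \<in> {x. scale (p ^ n) x = 0}"
        using tsplit x y by blast
    qed
  qed
next
  show "m_plus scale p \<subseteq> range (hmap jf)"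
  proof
    fix t assume t: "t \<in> m_plus scale p"
    have "\<exists>s. scale (coef t b) b = scale (s * p ^ jf b) b" for b
    proof -
      define n where "n = jf b"
      obtain x0 y where xy: "t = scale (p ^ n) x0 + y" "scale (p ^ n) y = 0"
        using t unfolding m_plus_def Im_pow_eq Ker_pow_eq by blast
      define G where "G = supp x0 \<union> supp y"
      have G: "finite G" "G \<subseteq> B" unfolding G_def using supp_fin supp_B by auto
      have rx: "x0 = (\<Sum>b\<in>G. scale (coef x0 b) b)" using G(1) by (intro rep_sum) (auto simp: G_def)
      have ry: "y = (\<Sum>b\<in>G. scale (coef y b) b)" using G(1) by (intro rep_sum) (auto simp: G_def)
      have "t = (\<Sum>b\<in>G. scale (coef x0 b * p ^ n + coef y b) b)"
      proof -
        have "t = scale (p ^ n) (\<Sum>b\<in>G. scale (coef x0 b) b) + (\<Sum>b\<in>G. scale (coef y b) b)"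
          using xy(1) rx ry by simp
        also have "\<dots> = (\<Sum>b\<in>G. scale (coef x0 b * p ^ n + coef y b) b)"
          by (simp add: scale_sum_right scale_left_distrib sum.distrib mult.commute)
        finally show ?thesis .
      qed
      from uniq[OF G this, of b]
      have e: "scale (if b \<in> G then coef x0 b * p ^ n + coef y b else 0) b = scale (coef t b) b" .
      show ?thesis
      proof (cases "b \<in> G")
        case False
        then have "scale (coef t b) b = scale (0 * p ^ jf b) b" using e by simp
        then show ?thesis by (rule exI)
      next
        case True
        have "hmap (\<lambda>_. n) y = 0" using xy(2) hconst by simp
        then have "scale (coef y b * p ^ n) b = 0" unfolding ker_iff by blast
        then obtain s' where s': "scale (coef y b) b = scale (s' * p ^ (ord b - n)) b" using KL by blast
        have "ord b - n = (jc b - jf b) + n" unfolding n_def jc_def jf_def by simp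
        then have pw: "p ^ (ord b - n) = p ^ (jc b - jf b) * p ^ n" by (simp add: power_add)
        have "scale (coef t b) b = scale (coef x0 b * p ^ n) b + scale (coef y b) b"
          using e True by (simp add: scale_left_distrib)
        also have "\<dots> = scale (coef x0 b * p ^ n) b + scale (s' * p ^ (jc b - jf b) * p ^ n) b"
          using s' pw by (simp add: mult.assoc)
        also have "\<dots> = scale ((coef x0 b + s' * p ^ (jc b - jf b)) * p ^ jf b) b"
          unfolding n_def by (simp add: scale_left_distrib distrib_right)
        finally show ?thesis by (rule exI)
      qed
    qed
    then show "t \<in> range (hmap jf)" unfolding range_iff by blast
  qed
qed

end


theorem proposition1p3p3:
  fixes scale :: "'a::idom \<Rightarrow> 'b::ab_group_add \<Rightarrow> 'b"
    and p :: 'a and N :: nat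
  assumes "module scale"
    and "dvr_uniformizer p"
    and "N \<ge> 1"
    and "\<forall>t. scale (p ^ N) t = 0"
  shows "scale p ` m_plus scale p \<subseteq> m_minus scale p
    \<and> m_minus scale p \<subseteq> m_plus scale p
    \<and> iso_to_quotient scale (m_plus scale p) (m_minus scale p)
    \<and> iso_to_quotient scale (m_minus scale p) (m_plus scale p)"
proof -
  have D: "dvrm scale p N" using assms unfolding dvrm_def dvrm_axioms_def by blast
  interpret dvrm scale p N by (rule D)
  have k: "\<And>t. t \<in> UNIV \<Longrightarrow> scale (p ^ N) t = 0" using assms(4) by simp
  have "\<exists>B\<subseteq>UNIV. 0 \<notin> B \<and> indep B \<and> UNIV \<subseteq> span B"
    by (rule struct_thm[of N, rule_format, OF subspace_UNIV k])
  then obtain B where B: "indep B" "UNIV \<subseteq> span B" by blast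
  have DB: "dvrb scale p N B" unfolding dvrb_def dvrb_axioms_def using D B by blast
  interpret dvrb scale p N B by (rule DB)
  have c1: "scale p ` m_plus scale p \<subseteq> m_minus scale p"
  proof
    fix z assume "z \<in> scale p ` m_plus scale p"
    then obtain u where u: "z = scale p (hmap jf u)" unfolding m_plus_eq by blast
    have "z = hmap (\<lambda>b. Suc (jf b)) u" unfolding u hshift ..
    moreover have "jc b \<le> Suc (jf b)" for b unfolding jc_def jf_def by linarith
    then have "hmap (\<lambda>b. Suc (jf b)) u \<in> range (hmap jc)" by (rule hmono)
    ultimately show "z \<in> m_minus scale p" unfolding m_minus_eq by simp
  qed
  have c2: "m_minus scale p \<subseteq> m_plus scale p"
  proof
    fix z assume "z \<in> m_minus scale p"
    then obtain u where u: "z = hmap jc u" unfolding m_minus_eq by blast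
    have "jf b \<le> jc b" for b unfolding jc_def jf_def by linarith
    then show "z \<in> m_plus scale p" unfolding m_plus_eq u by (rule hmono)
  qed
  have c3: "iso_to_quotient scale (m_plus scale p) (m_minus scale p)"
    by (rule iso_from_hom[OF hadd hscale m_plus_eq]) (simp add: m_minus_eq ker_jf)
  have c4: "iso_to_quotient scale (m_minus scale p) (m_plus scale p)"
    by (rule iso_from_hom[OF hadd hscale m_minus_eq]) (simp add: m_plus_eq ker_jc)
  show ?thesis using c1 c2 c3 c4 by blast
qed

end
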